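(* Let $s$ be a Sturmian word having a factorization $s=U_1U_2\cdots U_n\cdots$ where each $U_i$ ($i\ge1$) is a non-empty prefix of $s$. Then there exist integers $i,j\ge1$ with $r_s(U_i)\neq r_s(U_j)$.
   Context: A Sturmian word is an infinite word $s\in\{a,b\}^{\omega}$ that is aperiodic (not ultimately periodic) and balanced: for all factors $u,v$ of $s$ with $|u|=|v|$ one has $||u|_x-|v|_x|\le 1$ for $x\in\{a,b\}$, where $|u|_x$ is the number of occurrences of $x$ in $u$. A non-empty factor $w$ of $s$ is rich in the letter $z\in\{a,b\}$ if there is a factor $v$ of $s$ with $|v|=|w|$ and $|w|_z>|v|_z$; every non-empty factor of a Sturmian word is rich in exactly one letter, and $r_s(w)\in\{a,b\}$ denotes that letter. *)

theory Defs
  imports Main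
begin

datatype letter = a | b

type_synonym word = "nat \<Rightarrow> letter"

definition factor_at :: "word \<Rightarrow> nat \<Rightarrow> nat \<Rightarrow> letter list" where
  "factor_at s i n = map s [i..<i+n]"

definition is_factor :: "word \<Rightarrow> letter list \<Rightarrow> bool" where
  "is_factor s w \<longleftrightarrow> (\<exists>i. w = factor_at s i (length w))"

definition is_prefix :: "word \<Rightarrow> letter list \<Rightarrow> bool" where
  "is_prefix s w \<longleftrightarrow> w = factor_at s 0 (length w)"

definition letter_count :: "letter \<Rightarrow> letter list \<Rightarrow> nat" where
  "letter_count x u = length (filter (\<lambda>y. y = x) u)"

definition ultimately_periodic :: "word \<Rightarrow> bool" where
  "ultimately_periodic s \<longleftrightarrow> (\<exists>p>0. \<exists>n0. \<forall>n\<ge>n0. s (n + p) = s n)"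

definition balanced :: "word \<Rightarrow> bool" where
  "balanced s \<longleftrightarrow> (\<forall>u v x. is_factor s u \<longrightarrow> is_factor s v \<longrightarrow> length u = length v \<longrightarrow>
      letter_count x u \<le> letter_count x v + 1 \<and> letter_count x v \<le> letter_count x u + 1)"

definition sturmian :: "word \<Rightarrow> bool" where
  "sturmian s \<longleftrightarrow> \<not> ultimately_periodic s \<and> balanced s"

definition rich_in :: "word \<Rightarrow> letter list \<Rightarrow> letter \<Rightarrow> bool" where
  "rich_in s w z \<longleftrightarrow> w \<noteq> [] \<and> is_factor s w \<and>
     (\<exists>v. is_factor s v \<and> length v = length w \<and> letter_count z w > letter_count z v)"

definition rich_letter :: "word \<Rightarrow> letter list \<Rightarrow> letter" where
  "rich_letter s w = (THE z. rich_in s w z)"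

fun block_start :: "(nat \<Rightarrow> letter list) \<Rightarrow> nat \<Rightarrow> nat" where
  "block_start U 0 = 0"
| "block_start U (Suc i) = block_start U i + length (U i)"

definition is_factorization :: "word \<Rightarrow> (nat \<Rightarrow> letter list) \<Rightarrow> bool" where
  "is_factorization s U \<longleftrightarrow> (\<forall>i. U i \<noteq> [] \<and> U i = factor_at s (block_start U i) (length (U i)))"

end

theory Submission imports Defs begin

definition cnt :: "word \<Rightarrow> letter \<Rightarrow> nat \<Rightarrow> nat \<Rightarrow> nat" where
  "cnt s x p n = (\<Sum>i<n. if s (p+i) = x then 1 else 0)"

lemma cnt_Suc: "cnt s x p (Suc n) = cnt s x p n + (if s (p+n) = x then 1 else 0)"
  by (simp add: cnt_def)

lemma cnt_0[simp]: "cnt s x p 0 = 0" by (simp add: cnt_def)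

lemma cnt_1: "cnt s x p (Suc 0) = (if s p = x then 1 else 0)" by (simp add: cnt_def)

lemma lc_cnt: "letter_count x (factor_at s p n) = cnt s x p n"
  by (induction n) (auto simp: letter_count_def factor_at_def cnt_Suc)

lemma cnt_add: "cnt s x p (m+n) = cnt s x p m + cnt s x (p+m) n"
  by (induction n) (auto simp: cnt_Suc add.assoc)

lemma cnt_eq: "(\<And>i. i<n \<Longrightarrow> s(p+i) = s(q+i)) \<Longrightarrow> cnt s x p n = cnt s x q n"
  unfolding cnt_def by (rule sum.cong) auto

lemma letter_other: "(u::letter) \<noteq> v \<Longrightarrow> u \<noteq> x \<Longrightarrow> v = x"
  by (cases u; cases v; cases x) auto

lemma cnt_ab: "cnt s a p n + cnt s b p n = n"
proof (induction n)
  case (Suc n) then show ?case by (cases "s (p+n)") (auto simp: cnt_Suc)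
qed simp

lemma bal_cnt: "balanced s \<Longrightarrow> cnt s x p n \<le> cnt s x q n + 1"
  unfolding balanced_def is_factor_def
proof -
  assume h: "\<forall>ua va xa.
       (\<exists>i. ua = factor_at s i (length ua)) \<longrightarrow>
       (\<exists>i. va = factor_at s i (length va)) \<longrightarrow>
       length ua = length va \<longrightarrow>
       letter_count xa ua \<le> letter_count xa va + 1 \<and> letter_count xa va \<le> letter_count xa ua + 1"
  have l: "length (factor_at s i n) = n" for i by (simp add: factor_at_def)
  have "letter_count x (factor_at s p n) \<le> letter_count x (factor_at s q n) + 1"
  proof -
    have f1: "\<exists>i. factor_at s p n = factor_at s i (length (factor_at s p n))" using l by metis
    have f2: "\<exists>i. factor_at s q n = factor_at s i (length (factor_at s q n))" using l by metis
    have f3: "length (factor_at s p n) = length (factor_at s q n)" using l by simp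
    show ?thesis using h[rule_format, OF f1 f2 f3, of x] by simp
  qed
  then show ?thesis by (simp add: lc_cnt)
qed

lemma const_periodic:
  assumes "n > 0" and "\<And>q. q \<ge> Q \<Longrightarrow> cnt s x q n = C"
  shows "ultimately_periodic s"
proof -
  have key: "s (q + n) = s q" if q: "q \<ge> Q" for q
  proof -
  have "cnt s x q (n + 1) = cnt s x q n + cnt s x (q+n) 1" by (rule cnt_add)
  moreover have "cnt s x q (1 + n) = cnt s x q 1 + cnt s x (q+1) n" by (rule cnt_add)
  moreover have "cnt s x (q+1) n = cnt s x q n"
  proof -
    have "cnt s x (q+1) n = C" using assms(2)[of "q+1"] q by linarith
    moreover have "cnt s x q n = C" using assms(2)[of "q"] q by linarith
    ultimately show ?thesis by simp
  qed
  ultimately have "(if s (q+n) = x then 1 else 0) = (if s q = x then (1::nat) else 0)"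
    by (simp only: cnt_1 One_nat_def add.commute[of n] )
  then show "s (q + n) = s q" by (cases "s (q+n)"; cases "s q"; cases x) auto
  qed
  show ?thesis unfolding ultimately_periodic_def using key assms(1) by blast
qed

lemma rich_prefix_iff:
  assumes "n > 0"
  shows "rich_in s (factor_at s 0 n) z \<longleftrightarrow> (\<exists>q. cnt s z q n < cnt s z 0 n)"
proof -
  have l: "length (factor_at s i n) = n" for i by (simp add: factor_at_def)
  have ne: "factor_at s 0 n \<noteq> []" using assms l[of 0] by auto
  have f: "is_factor s (factor_at s 0 n)" unfolding is_factor_def using l by metis
  show ?thesis
  proof
    assume "rich_in s (factor_at s 0 n) z"
    then obtain v where v: "is_factor s v" "length v = n" "letter_count z (factor_at s 0 n) > letter_count z v"
      unfolding rich_in_def l by auto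
    then obtain i where "v = factor_at s i n" unfolding is_factor_def by auto
    then show "\<exists>q. cnt s z q n < cnt s z 0 n" using v(3) by (auto simp: lc_cnt)
  next
    assume "\<exists>q. cnt s z q n < cnt s z 0 n"
    then obtain q where q: "cnt s z q n < cnt s z 0 n" by auto
    have "is_factor s (factor_at s q n)" unfolding is_factor_def using l by metis
    then show "rich_in s (factor_at s 0 n) z" unfolding rich_in_def using ne f q l
      by (auto simp: lc_cnt intro!: exI[of _ "factor_at s q n"])
  qed
qed

lemma other_letter_cnt: "cnt s b q n < cnt s b 0 n \<Longrightarrow> cnt s a q n > cnt s a 0 n"
  using cnt_ab[of s q n] cnt_ab[of s 0 n] by linarith

lemma rich_exists:
  assumes "sturmian s" "n > 0"
  shows "\<exists>z. rich_in s (factor_at s 0 n) z"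
proof (rule ccontr)
  assume "\<not> ?thesis"
  then have "\<not> (\<exists>q. cnt s b q n < cnt s b 0 n)" "\<not> (\<exists>q. cnt s a q n < cnt s a 0 n)"
    using rich_prefix_iff[OF assms(2)] by blast+
  then have "cnt s b q n = cnt s b 0 n" for q
  proof -
    have "\<not> cnt s b q n < cnt s b 0 n" "\<not> cnt s a q n < cnt s a 0 n" using \<open>\<not> (\<exists>q. cnt s b q n < cnt s b 0 n)\<close> \<open>\<not> (\<exists>q. cnt s a q n < cnt s a 0 n)\<close> by auto
    then show ?thesis using cnt_ab[of s q n] cnt_ab[of s 0 n] by linarith
  qed
  then have "ultimately_periodic s" using const_periodic[OF assms(2)] by blast
  then show False using assms(1) unfolding sturmian_def by blast
qed

lemma rich_unique:
  assumes "balanced s" "n > 0" "rich_in s (factor_at s 0 n) z1" "rich_in s (factor_at s 0 n) z2"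
  shows "z1 = z2"
proof (rule ccontr)
  assume ne: "z1 \<noteq> z2"
  have "\<exists>q. cnt s a q n < cnt s a 0 n" "\<exists>q. cnt s b q n < cnt s b 0 n"
    using assms(3,4) ne rich_prefix_iff[OF assms(2)] by (cases z1; cases z2; auto)+
  then obtain q1 q2 where q: "cnt s a q1 n < cnt s a 0 n" "cnt s b q2 n < cnt s b 0 n" by auto
  have "cnt s b q1 n > cnt s b 0 n" using q(1) cnt_ab[of s q1 n] cnt_ab[of s 0 n] by linarith
  then show False using q(2) bal_cnt[OF assms(1), of b q1 n q2] by linarith
qed

lemma rich_letter_prefix:
  assumes "sturmian s" "n > 0"
  shows "rich_in s (factor_at s 0 n) (rich_letter s (factor_at s 0 n))"
proof -
  have bal: "balanced s" using assms(1) unfolding sturmian_def by blast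
  have "\<exists>!z. rich_in s (factor_at s 0 n) z"
    using rich_exists[OF assms] rich_unique[OF bal assms(2)] by blast
  then show ?thesis unfolding rich_letter_def by (rule theI')
qed

definition gtx :: "letter \<Rightarrow> (nat \<Rightarrow> letter) \<Rightarrow> (nat \<Rightarrow> letter) \<Rightarrow> bool" where
  "gtx x u v \<longleftrightarrow> (\<exists>j. (\<forall>i<j. u i = v i) \<and> u j = x \<and> v j \<noteq> x)"

lemma gtx_trans: assumes "gtx x u v" "gtx x v w" shows "gtx x u w"
proof -
  obtain j1 where j1: "\<forall>i<j1. u i = v i" "u j1 = x" "v j1 \<noteq> x" using assms(1) unfolding gtx_def by blast
  obtain j2 where j2: "\<forall>i<j2. v i = w i" "v j2 = x" "w j2 \<noteq> x" using assms(2) unfolding gtx_def by blast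
  consider "j1 < j2" | "j2 < j1" | "j1 = j2" by linarith
  then show ?thesis
  proof cases
    case 1 then show ?thesis unfolding gtx_def using j1 j2 by (intro exI[of _ j1]) auto
  next
    case 2 then show ?thesis unfolding gtx_def using j1 j2 by (intro exI[of _ j2]) auto
  next
    case 3 then show ?thesis using j1 j2 by simp
  qed
qed

lemma lemA:
  assumes heavy: "\<forall>q. cnt s x q m \<le> cnt s x p m" and ne: "\<exists>j. s (p+j) \<noteq> s (p+m+j)"
  shows "gtx x (\<lambda>j. s (p+j)) (\<lambda>j. s (p+m+j))"
proof -
  define j where "j = (LEAST j. s(p+j) \<noteq> s(p+m+j))"
  have dj: "s(p+j) \<noteq> s(p+m+j)" unfolding j_def using LeastI_ex[OF ne] .
  have bel: "\<forall>i<j. s(p+i) = s(p+m+i)" unfolding j_def using not_less_Least by blast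
  show ?thesis
  proof (cases "s(p+j) = x")
    case True then show ?thesis using bel dj unfolding gtx_def by (intro exI[of _ j]) auto
  next
    case False
    then have vx: "s(p+m+j) = x" using letter_other dj by blast
    have e1: "cnt s x p (Suc j + m) = cnt s x p (Suc j) + cnt s x (p + Suc j) m" by (rule cnt_add)
    have e2: "cnt s x p (m + Suc j) = cnt s x p m + cnt s x (p+m) (Suc j)" by (rule cnt_add)
    have e3: "cnt s x p (Suc j) = cnt s x p j" using False by (simp add: cnt_Suc)
    have e4: "cnt s x (p+m) (Suc j) = cnt s x (p+m) j + 1" using vx by (simp add: cnt_Suc)
    have e5: "cnt s x p j = cnt s x (p+m) j" using bel by (intro cnt_eq) (simp add: add.assoc)
    have "cnt s x p (Suc j + m) = cnt s x p (m + Suc j)" by (simp only: add.commute[of "Suc j" m])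
    then have "cnt s x (p + Suc j) m = cnt s x p m + 1" using e1 e2 e3 e4 e5 by linarith
    then show ?thesis using heavy[rule_format, of "p + Suc j"] by linarith
  qed
qed

locale stsetup =
  fixes s :: word and x :: letter and n :: "nat \<Rightarrow> nat" and N :: "nat \<Rightarrow> nat"
  assumes np: "\<not> ultimately_periodic s"
    and bal: "\<And>p q m. cnt s x p m \<le> cnt s x q m + 1"
    and pos: "\<And>i. n i > 0"
    and N0: "N 0 = 0" and NS: "\<And>i. N (Suc i) = N i + n i"
    and blk: "\<And>i j. j < n i \<Longrightarrow> s (N i + j) = s j"
    and hv: "\<And>i q. cnt s x q (n i) \<le> cnt s x 0 (n i)"
begin

lemma blk_cnt: "cnt s x (N i) (n i) = cnt s x 0 (n i)"
  by (rule cnt_eq) (simp add: blk)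

lemma step: "gtx x (\<lambda>j. s (N i + j)) (\<lambda>j. s (N (Suc i) + j))"
proof -
  have ne: "\<exists>j. s (N i + j) \<noteq> s (N i + n i + j)"
  proof (rule ccontr)
    assume "\<not> ?thesis"
    then have h: "s (N i + j) = s (N i + n i + j)" for j by blast
    have "\<forall>m\<ge>N i. s (m + n i) = s m"
    proof (intro allI impI)
      fix m assume "m \<ge> N i"
      then obtain j where "m = N i + j" using le_iff_add by blast
      then show "s (m + n i) = s m" using h[of j] by (simp add: add_ac)
    qed
    then show False using np pos[of i] unfolding ultimately_periodic_def by blast
  qed
  have "\<forall>q. cnt s x q (n i) \<le> cnt s x (N i) (n i)" using hv blk_cnt by simp
  from lemA[OF this ne] show ?thesis by (simp add: NS)
qed

lemma chain: "gtx x (\<lambda>j. s (N (Suc 0) + j)) (\<lambda>j. s (N (Suc (Suc k)) + j))"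
proof (induction k)
  case 0 then show ?case using step[of 1] by simp
next
  case (Suc k) then show ?case using step[of "Suc (Suc k)"] gtx_trans by blast
qed

lemma unbounded_false:
  assumes "\<not> (\<exists>B. \<forall>i. n i \<le> B)"
  shows False
proof -
  obtain d where d: "\<forall>i<d. s i = s (N 1 + i)" "s d = x" "s (N 1 + d) \<noteq> x"
    using step[of 0] unfolding gtx_def N0 by auto
  obtain k where k: "n k > d + n 0 + n 1" using assms by (meson not_le_imp_less)
  have "k \<noteq> 0" using k by (intro notI) simp
  have "k \<noteq> 1" using k by (intro notI) simp
  then obtain k' where k': "k = Suc (Suc k')" using \<open>k \<noteq> 0\<close> by (metis One_nat_def not0_implies_Suc)
  obtain j2 where j2: "\<forall>i<j2. s (N 1 + i) = s (N k + i)" "s (N 1 + j2) = x" "s (N k + j2) \<noteq> x"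
    using chain[of k'] unfolding gtx_def k' by auto
  have ag: "s (N k + i) = s i" if "i \<le> d" for i using blk[of i k] k that by simp
  consider "j2 < d" | "d < j2" | "j2 = d" by linarith
  then show False
  proof cases
    case 1
    have "s j2 = s (N 1 + j2)" using d(1) 1 by blast
    moreover have "s (N k + j2) = s j2" using ag[of j2] 1 by linarith
    ultimately show ?thesis using j2(2,3) by argo
  next
    case 2
    have "s (N 1 + d) = s (N k + d)" using j2(1) 2 by blast
    moreover have "s (N k + d) = s d" using ag[of d] by linarith
    ultimately show ?thesis using d(2,3) by argo
  next
    case 3 then show ?thesis using d(3) j2(2) by simp
  qed
qed

lemma cnt_mult_le: assumes "\<forall>q. cnt s x q m \<le> M" shows "cnt s x p (k*m) \<le> k*M"
proof (induction k arbitrary: p)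
  case (Suc k)
  have "cnt s x p (Suc k * m) = cnt s x p m + cnt s x (p+m) (k*m)" using cnt_add[of s x p m "k*m"] by simp
  moreover have "cnt s x p m \<le> M" using assms by blast
  ultimately show ?case using Suc[of "p+m"] by simp
qed simp

lemma light:
  assumes m: "m > 0" and hm: "\<forall>q. cnt s x q m \<le> M"
  shows "\<exists>p T. cnt s x p (T*m) + 2 \<le> T*M"
proof -
  define L where "L = {q. cnt s x q m < M}"
  have infL: "infinite L"
  proof
    assume "finite L"
    then obtain Q where Q: "\<forall>q\<in>L. q < Q" using finite_nat_set_iff_bounded by blast
    have "cnt s x q m = M" if "q \<ge> Q" for q using Q that hm unfolding L_def
      by (metis le_antisym mem_Collect_eq not_le not_less)
    then have "ultimately_periodic s" using const_periodic[OF m] by blast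
    then show False using np by blast
  qed
  have "finite ((\<lambda>q. q mod m) ` L)"
    by (rule finite_subset[of _ "{..<m}"]) (use m in auto)
  from pigeonhole_infinite[OF infL this] obtain q1 where
    q1: "q1 \<in> L" and infF: "infinite {q\<in>L. q mod m = q1 mod m}" by blast
  have "\<exists>q2\<in>{q\<in>L. q mod m = q1 mod m}. q2 > q1"
  proof (rule ccontr)
    assume "\<not> ?thesis"
    then have "{q\<in>L. q mod m = q1 mod m} \<subseteq> {..q1}" by auto
    then show False using infF finite_subset by blast
  qed
  then obtain q2 where q2: "q2 \<in> L" "q2 mod m = q1 mod m" "q2 > q1" by blast
  then have "m dvd q2 - q1" using mod_eq_dvd_iff_nat[of q1 q2 m] by simp
  then obtain k where k: "q2 - q1 = m * k" by (auto elim: dvdE)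
  then have "k \<noteq> 0" using q2(3) by (intro notI) simp
  then obtain k' where k': "k = Suc k'" using not0_implies_Suc by blast
  have q2e: "q2 = q1 + m + k'*m" using k k' q2(3) by (simp add: algebra_simps)
  have "cnt s x q1 (m + (k'*m + m)) = cnt s x q1 m + cnt s x (q1+m) (k'*m + m)" by (rule cnt_add)
  moreover have "cnt s x (q1+m) (k'*m + m) = cnt s x (q1+m) (k'*m) + cnt s x (q1+m+k'*m) m" by (rule cnt_add)
  moreover have "cnt s x (q1+m) (k'*m) \<le> k'*M" by (rule cnt_mult_le[OF hm])
  moreover have "cnt s x q1 m < M" using q1 unfolding L_def by simp
  moreover have "cnt s x q2 m < M" using q2(1) unfolding L_def by simp
  ultimately have "cnt s x q1 (m + (k'*m + m)) + 2 \<le> M + (k'*M + M)"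
    unfolding q2e by linarith
  moreover have eq1: "Suc (Suc k') * m = m + (k'*m + m)" by simp
  moreover have eq2: "Suc (Suc k') * M = M + (k'*M + M)" by simp
  ultimately have "cnt s x q1 (Suc (Suc k') * m) + 2 \<le> Suc (Suc k') * M"
    by (simp only: eq1 eq2)
  then show ?thesis by blast
qed

lemma N_sum: "N K = (\<Sum>i<K. n i)"
  by (induction K) (simp_all add: N0 NS)

lemma C_sum: "cnt s x 0 (N K) = (\<Sum>i<K. cnt s x 0 (n i))"
proof (induction K)
  case (Suc K)
  have "cnt s x 0 (N (Suc K)) = cnt s x 0 (N K) + cnt s x (N K) (n K)" using cnt_add[of s x 0 "N K" "n K"] by (simp add: NS)
  then show ?case using Suc blk_cnt[of K] by simp
qed (simp add: N0)

lemma subadd: "finite A \<Longrightarrow> cnt s x q (\<Sum>i\<in>A. n i) \<le> (\<Sum>i\<in>A. cnt s x 0 (n i))"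
proof (induction A arbitrary: q rule: finite_induct)
  case (insert i A)
  have "cnt s x q (\<Sum>j\<in>insert i A. n j) = cnt s x q (n i) + cnt s x (q + n i) (\<Sum>j\<in>A. n j)"
    using insert(1,2) cnt_add[of s x q "n i"] by simp
  then show ?case using insert(1,2) insert(3)[of "q + n i"] hv[of q i] by simp
qed simp

lemma bounded_false:
  assumes "\<exists>B. \<forall>i. n i \<le> B"
  shows False
proof -
  obtain B where B: "\<forall>i. n i \<le> B" using assms by blast
  have "finite (range n)" by (rule finite_subset[of _ "{..B}"]) (use B in auto)
  from pigeonhole_infinite[OF infinite_UNIV_nat this] obtain i0 where
    infF: "infinite {i\<in>UNIV. n i = n i0}" by blast
  define m where "m = n i0"
  define M where "M = cnt s x 0 m"
  have hm: "\<forall>q. cnt s x q m \<le> M" unfolding m_def M_def using hv by blast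
  have m0: "m > 0" using pos unfolding m_def by blast
  obtain p T where pT: "cnt s x p (T*m) + 2 \<le> T*M" using light[OF m0 hm] by blast
  obtain I where I: "finite I" "card I = T" "I \<subseteq> {i\<in>UNIV. n i = n i0}"
    using infinite_arbitrarily_large[OF infF] by blast
  obtain K where K: "\<forall>i\<in>I. i < K" using finite_nat_set_iff_bounded I(1) by blast
  then have IK: "I \<subseteq> {..<K}" by auto
  define A where "A = {..<K} - I"
  have fA: "finite A" unfolding A_def by simp
  have "(\<Sum>i\<in>I. n i) = (\<Sum>i\<in>I. m)" by (rule sum.cong) (use I in \<open>auto simp: m_def\<close>)
  then have nI: "(\<Sum>i\<in>I. n i) = T*m" using I by simp
  have "(\<Sum>i\<in>I. cnt s x 0 (n i)) = (\<Sum>i\<in>I. M)" by (rule sum.cong) (use I in \<open>auto simp: m_def M_def\<close>)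
  then have cI: "(\<Sum>i\<in>I. cnt s x 0 (n i)) = T*M" using I by simp
  have NK: "N K = T*m + (\<Sum>i\<in>A. n i)"
    unfolding N_sum A_def using sum.subset_diff[OF IK, of n] nI by simp
  have CK: "cnt s x 0 (N K) = T*M + (\<Sum>i\<in>A. cnt s x 0 (n i))"
    unfolding C_sum A_def using sum.subset_diff[OF IK, of "\<lambda>i. cnt s x 0 (n i)"] cI by simp
  have "cnt s x p (N K) = cnt s x p (T*m) + cnt s x (p + T*m) (\<Sum>i\<in>A. n i)"
    unfolding NK by (rule cnt_add)
  moreover have "cnt s x (p + T*m) (\<Sum>i\<in>A. n i) \<le> (\<Sum>i\<in>A. cnt s x 0 (n i))" by (rule subadd[OF fA])
  moreover have "cnt s x 0 (N K) \<le> cnt s x p (N K) + 1" by (rule bal)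
  ultimately show False using CK pT by linarith
qed

lemma core_false: False
  using bounded_false unbounded_false by blast

end

theorem mainTheorem7:
  fixes s :: word and U :: "nat \<Rightarrow> letter list"
  assumes "sturmian s"
    and "is_factorization s U"
    and "\<forall>i. is_prefix s (U i)"
  shows "\<exists>i j. rich_letter s (U i) \<noteq> rich_letter s (U j)"
proof (rule ccontr)
  assume "\<not> ?thesis"
  then have same: "\<And>i. rich_letter s (U i) = rich_letter s (U 0)" by blast
  define x where "x = rich_letter s (U 0)"
  define n where "n i = length (U i)" for i
  define N where "N i = block_start U i" for i
  have bal: "balanced s" and np: "\<not> ultimately_periodic s" using assms(1) unfolding sturmian_def by auto
  have Up: "U i = factor_at s 0 (n i)" for i using assms(3) unfolding is_prefix_def n_def by blast
  have Ub: "U i = factor_at s (N i) (n i)" for i using assms(2) unfolding is_factorization_def n_def N_def by blast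
  have pos: "n i > 0" for i using assms(2) unfolding is_factorization_def n_def by auto
  have rich: "rich_in s (U i) x" for i
    using rich_letter_prefix[OF assms(1) pos[of i]] Up[of i] same[of i] unfolding x_def by simp
  have hv: "cnt s x q (n i) \<le> cnt s x 0 (n i)" for i q
  proof -
    obtain q' where "cnt s x q' (n i) < cnt s x 0 (n i)"
      using rich[of i] rich_prefix_iff[OF pos[of i]] Up[of i] by auto
    then show ?thesis using bal_cnt[OF bal, of x q "n i" q'] by linarith
  qed
  have blk: "s (N i + j) = s j" if "j < n i" for i j
  proof -
    have "factor_at s (N i) (n i) ! j = factor_at s 0 (n i) ! j" using Up[of i] Ub[of i] by simp
    then show ?thesis using that by (simp add: factor_at_def)
  qed
  interpret stsetup s x n N
    by unfold_locales (use np bal_cnt[OF bal] pos blk hv in \<open>auto simp: N_def n_def\<close>)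
  show False by (rule core_false)
qed

end
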